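(* For $\tau^1,\tau^2$ both aromas with free edges, or both trees with free edges, $\langle\delta\tau^1,\tau^2\rangle=\langle\tau^1,\overline\delta\tau^2\rangle$. Moreover, for every aroma or tree with free edges $\tau$, $\overline\Phi(\delta\tau)=\partial\,\overline\Phi(\tau)$.
   Context: Fix a finite set $C$ and a field of characteristic zero. A tree (resp. aroma) is a finite connected directed graph with $C$-decorated vertices in which every vertex has exactly one outgoing edge except one root vertex with none (resp. every vertex has exactly one outgoing edge); an aroma contains a unique cycle. A tree or aroma with free edges additionally assigns to each vertex $v$ a number $r_v\ge0$ of free edges (dangling edges ending at $v$); objects are taken up to isomorphism preserving decorations and the $r_v$. $\overline{A_0}$ and $\overline T$ are the spans of aromas and trees with free edges. The symmetry factor $\sigma(\tau)$ is the number of automorphisms preserving decorations and free-edge numbers; the pairing is $\langle\tau,\tau'\rangle=\sigma(\tau)\mathbf 1_{\tau=\tau'}$. For a vertex $v$, $\delta_v$ adds one free edge at $v$ and $\overline\delta_v$ removes one free edge at $v$ (giving $0$ if $r_v=0$); $\delta=\sum_v\delta_v$, $\overline\delta=\sum_v\overline\delta_v$, extended linearly. Let $f(v)$ be the number of (non-free) edges ending at $v$. The extended fertility map is $\overline\Phi(\tau)=\prod_vx^{d(v)}_{f(v)+r_v-1}$, a monomial in variables $x^a_j$ ($a\in C$, $j\ge-1$); for aromas it is regarded in the space $\overline{M_0}$ and for trees in the space $\overline{M_{-1}}$ (formal copies of spans of monomials). $\partial$ is the derivation $\partial x^a_j=x^a_{j+1}$, acting on each of these spaces. *)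

theory Defs
  imports Main "HOL-Library.FuncSet" "HOL-Library.Multiset"
begin

text \<open>A raw object has vertex set {0..<nv t}; dec t v is the decoration (in the finite
 type 'c playing the role of C); succ t v is the target of the unique outgoing edge of v
 (None for the root of a tree); fr t v is the number r_v of free edges ending at v.
 Values outside {0..<nv t} are irrelevant.\<close>

datatype 'c fobj = FObj (nv: nat) (dec: "nat \<Rightarrow> 'c") (succ: "nat \<Rightarrow> nat option") (fr: "nat \<Rightarrow> nat")

definition edge_rel :: "'c fobj \<Rightarrow> (nat \<times> nat) set" where
  "edge_rel t = {(u, w). u < nv t \<and> succ t u = Some w}"

definition connected_fobj :: "'c fobj \<Rightarrow> bool" where
  "connected_fobj t \<longleftrightarrow>
     (\<forall>u<nv t. \<forall>w<nv t. (u, w) \<in> (edge_rel t \<union> (edge_rel t)\<inverse>)\<^sup>*)"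

definition is_aroma :: "'c fobj \<Rightarrow> bool" where
  "is_aroma t \<longleftrightarrow> 0 < nv t \<and> (\<forall>v<nv t. \<exists>w<nv t. succ t v = Some w) \<and> connected_fobj t"

definition is_tree :: "'c fobj \<Rightarrow> bool" where
  "is_tree t \<longleftrightarrow> 0 < nv t
     \<and> (\<exists>!\<rho>. \<rho> < nv t \<and> succ t \<rho> = None)
     \<and> (\<forall>v<nv t. \<forall>w. succ t v = Some w \<longrightarrow> w < nv t)
     \<and> connected_fobj t"

definition is_iso :: "'c fobj \<Rightarrow> 'c fobj \<Rightarrow> (nat \<Rightarrow> nat) \<Rightarrow> bool" where
  "is_iso t t' \<phi> \<longleftrightarrow> bij_betw \<phi> {..<nv t} {..<nv t'} \<and>
     (\<forall>v<nv t. dec t' (\<phi> v) = dec t v \<and> fr t' (\<phi> v) = fr t v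
              \<and> succ t' (\<phi> v) = map_option \<phi> (succ t v))"

definition iso :: "'c fobj \<Rightarrow> 'c fobj \<Rightarrow> bool" where
  "iso t t' \<longleftrightarrow> (\<exists>\<phi>. is_iso t t' \<phi>)"

definition iso_class :: "'c fobj \<Rightarrow> 'c fobj set" where
  "iso_class t = {t'. iso t t'}"

definition sigma :: "'c fobj \<Rightarrow> nat" where
  "sigma t = card {\<phi> \<in> {..<nv t} \<rightarrow>\<^sub>E {..<nv t}. is_iso t t \<phi>}"

definition rep :: "'c fobj set \<Rightarrow> 'c fobj" where
  "rep X = (SOME t. t \<in> X)"

text \<open>Elements of the span of isomorphism classes are functions 'c fobj set => 'k
 (only nonzero on isomorphism classes, finitely many).\<close>

definition basis :: "'c fobj \<Rightarrow> 'c fobj set \<Rightarrow> 'k::field" where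
  "basis t = (\<lambda>X. if X = iso_class t then 1 else 0)"

definition pairing :: "('c fobj set \<Rightarrow> 'k::field) \<Rightarrow> ('c fobj set \<Rightarrow> 'k) \<Rightarrow> 'k" where
  "pairing f g = (\<Sum>X\<in>{X. f X \<noteq> 0 \<and> g X \<noteq> 0}. f X * g X * of_nat (sigma (rep X)))"

definition add_free :: "'c fobj \<Rightarrow> nat \<Rightarrow> 'c fobj" where
  "add_free t v = FObj (nv t) (dec t) (succ t) ((fr t)(v := fr t v + 1))"

definition rem_free :: "'c fobj \<Rightarrow> nat \<Rightarrow> 'c fobj" where
  "rem_free t v = FObj (nv t) (dec t) (succ t) ((fr t)(v := fr t v - 1))"

definition delta :: "'c fobj \<Rightarrow> 'c fobj set \<Rightarrow> 'k::field" where
  "delta t = (\<lambda>X. \<Sum>v<nv t. basis (add_free t v) X)"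

definition deltabar :: "'c fobj \<Rightarrow> 'c fobj set \<Rightarrow> 'k::field" where
  "deltabar t = (\<lambda>X. \<Sum>v<nv t. if fr t v = 0 then 0 else basis (rem_free t v) X)"

text \<open>A monomial in the variables x^a_j is a multiset of pairs (a, j); a polynomial is
 a (finitely supported) function from monomials to 'k.\<close>

definition fertility :: "'c fobj \<Rightarrow> nat \<Rightarrow> nat" where
  "fertility t v = card {u. u < nv t \<and> succ t u = Some v}"

definition Phi :: "'c fobj \<Rightarrow> ('c \<times> int) multiset" where
  "Phi t = image_mset (\<lambda>v. (dec t v, int (fertility t v) + int (fr t v) - 1)) (mset_set {..<nv t})"

definition mono :: "('c \<times> int) multiset \<Rightarrow> ('c \<times> int) multiset \<Rightarrow> 'k::field" where
  "mono m = (\<lambda>m'. if m' = m then 1 else 0)"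

definition PhiL :: "('c fobj set \<Rightarrow> 'k::field) \<Rightarrow> ('c \<times> int) multiset \<Rightarrow> 'k" where
  "PhiL f = (\<lambda>m. \<Sum>X\<in>{X. f X \<noteq> 0}. f X * mono (Phi (rep X)) m)"

text \<open>The derivation with \<partial> x^a_j = x^a_(j+1): on a monomial and extended linearly.\<close>

definition Dmon :: "('c \<times> int) multiset \<Rightarrow> ('c \<times> int) multiset \<Rightarrow> 'k::field" where
  "Dmon m = (\<lambda>m'. \<Sum>y\<in>set_mset m.
      of_nat (count m y) * mono (m - {#y#} + {#(fst y, snd y + 1)#}) m')"

definition Dpoly :: "(('c \<times> int) multiset \<Rightarrow> 'k::field) \<Rightarrow> ('c \<times> int) multiset \<Rightarrow> 'k" where
  "Dpoly P = (\<lambda>m'. \<Sum>m\<in>{m. P m \<noteq> 0}. P m * Dmon m m')"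

end

theory Submission
  imports Defs
begin


definition closed_fobj :: "'c fobj \<Rightarrow> bool" where
  "closed_fobj t \<longleftrightarrow> (\<forall>v<nv t. \<forall>w. succ t v = Some w \<longrightarrow> w < nv t)"

definition isos :: "'c fobj \<Rightarrow> 'c fobj \<Rightarrow> (nat \<Rightarrow> nat) set" where
  "isos a b = {\<phi> \<in> {..<nv a} \<rightarrow>\<^sub>E {..<nv b}. is_iso a b \<phi>}"

lemma iso_comp: "is_iso a b \<phi> \<Longrightarrow> is_iso b c \<psi> \<Longrightarrow> is_iso a c (\<psi> \<circ> \<phi>)"
proof -
  assume i1: "is_iso a b \<phi>" and i2: "is_iso b c \<psi>"
  have b1: "bij_betw \<phi> {..<nv a} {..<nv b}" using i1 by (simp add: is_iso_def)
  have b2: "bij_betw \<psi> {..<nv b} {..<nv c}" using i2 by (simp add: is_iso_def)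
  have "dec c (\<psi> (\<phi> v)) = dec a v \<and> fr c (\<psi> (\<phi> v)) = fr a v
     \<and> succ c (\<psi> (\<phi> v)) = map_option (\<psi> \<circ> \<phi>) (succ a v)" if v: "v < nv a" for v
  proof -
    have "\<phi> v < nv b" using b1 v by (metis bij_betw_apply lessThan_iff)
    then show ?thesis using i1 i2 v unfolding is_iso_def by (simp add: option.map_comp)
  qed
  then show ?thesis using bij_betw_trans[OF b1 b2] unfolding is_iso_def by simp
qed

lemma iso_range: "is_iso a b \<phi> \<Longrightarrow> v < nv a \<Longrightarrow> \<phi> v < nv b"
  unfolding is_iso_def by (metis bij_betw_apply lessThan_iff)

lemma iso_surj:
  assumes i: "is_iso a b \<phi>" and v': "v' < nv b"
  obtains v where "v < nv a" "v' = \<phi> v"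
proof -
  have "\<phi> ` {..<nv a} = {..<nv b}" using i unfolding is_iso_def by (simp add: bij_betw_def)
  then have "v' \<in> \<phi> ` {..<nv a}" using v' by simp
  then show ?thesis using that by blast
qed

lemma iso_refl: "is_iso a a id"
  unfolding is_iso_def by (auto simp: option.map_id)

lemma iso_inv:
  assumes c: "closed_fobj a" and i: "is_iso a b \<phi>"
  shows "is_iso b a (inv_into {..<nv a} \<phi>)"
proof -
  have bj: "bij_betw \<phi> {..<nv a} {..<nv b}" using i by (simp add: is_iso_def)
  let ?\<psi> = "inv_into {..<nv a} \<phi>"
  have "bij_betw ?\<psi> {..<nv b} {..<nv a}" using bj by (rule bij_betw_inv_into)
  moreover have "dec a (?\<psi> v') = dec b v' \<and> fr a (?\<psi> v') = fr b v'
          \<and> succ a (?\<psi> v') = map_option ?\<psi> (succ b v')" if v': "v' < nv b" for v'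
  proof -
    obtain v where v: "v < nv a" "v' = \<phi> v" using iso_surj[OF i v'] by blast
    have inj: "inj_on \<phi> {..<nv a}" using bj bij_betw_def by blast
    have pv: "?\<psi> v' = v" using v inj by (simp add: inv_into_f_f)
    have s: "succ b v' = map_option \<phi> (succ a v)" "dec b v' = dec a v" "fr b v' = fr a v"
      using i v unfolding is_iso_def by auto
    have "map_option ?\<psi> (map_option \<phi> (succ a v)) = succ a v"
    proof (cases "succ a v")
      case (Some w)
      then have "w < nv a" using c v unfolding closed_fobj_def by auto
      then show ?thesis using Some inj by (simp add: inv_into_f_f)
    qed simp
    then show ?thesis using pv s by simp
  qed
  ultimately show ?thesis unfolding is_iso_def by blast
qed

lemma iso_cong:
  assumes c: "closed_fobj a" and i: "is_iso a b \<phi>" and eq: "\<And>x. x < nv a \<Longrightarrow> \<psi> x = \<phi> x"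
  shows "is_iso a b \<psi>"
proof -
  have "bij_betw \<psi> {..<nv a} {..<nv b}" using i eq unfolding is_iso_def
    by (metis bij_betw_cong lessThan_iff)
  moreover have "map_option \<psi> (succ a v) = map_option \<phi> (succ a v)" if "v < nv a" for v
    using c that eq unfolding closed_fobj_def by (cases "succ a v") auto
  ultimately show ?thesis using i eq unfolding is_iso_def by auto
qed

lemma iso_closed:
  assumes c: "closed_fobj a" and i: "is_iso a b \<phi>"
  shows "closed_fobj b"
  unfolding closed_fobj_def
proof (intro allI impI)
  fix v' w' assume v': "v' < nv b" and s: "succ b v' = Some w'"
  have bj: "bij_betw \<phi> {..<nv a} {..<nv b}" using i by (simp add: is_iso_def)
  obtain v where v: "v < nv a" "v' = \<phi> v" using iso_surj[OF i v'] by blast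
  have "succ b v' = map_option \<phi> (succ a v)" using i v unfolding is_iso_def by auto
  then obtain w where "succ a v = Some w" and "w' = \<phi> w" using s by (cases "succ a v") auto
  moreover have "w < nv a" using c v \<open>succ a v = Some w\<close> unfolding closed_fobj_def by blast
  ultimately show "w' < nv b" using iso_range[OF i] by simp
qed

lemma finite_isos: "finite (isos a b)"
proof -
  have "finite ({..<nv a} \<rightarrow>\<^sub>E {..<nv b})" by (rule finite_PiE) auto
  then show ?thesis unfolding isos_def by (rule rev_finite_subset) blast
qed

lemma card_isos_le:
  assumes ca': "closed_fobj a'" and \<alpha>: "is_iso a' a \<alpha>" and \<beta>: "is_iso b b' \<beta>"
  shows "card (isos a b) \<le> card (isos a' b')"
proof -
  let ?F = "\<lambda>\<phi>. restrict (\<beta> \<circ> \<phi> \<circ> \<alpha>) {..<nv a'}"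
  have ba: "bij_betw \<alpha> {..<nv a'} {..<nv a}" using \<alpha> by (simp add: is_iso_def)
  have bb: "bij_betw \<beta> {..<nv b} {..<nv b'}" using \<beta> by (simp add: is_iso_def)
  have "inj_on ?F (isos a b)"
  proof (rule inj_onI)
    fix \<phi>1 \<phi>2 assume p1: "\<phi>1 \<in> isos a b" and p2: "\<phi>2 \<in> isos a b" and e: "?F \<phi>1 = ?F \<phi>2"
    show "\<phi>1 = \<phi>2"
    proof (rule extensionalityI[of _ "{..<nv a}"])
      show "\<phi>1 \<in> extensional {..<nv a}" "\<phi>2 \<in> extensional {..<nv a}"
        using p1 p2 unfolding isos_def by (auto simp: PiE_def)
      fix x assume x: "x \<in> {..<nv a}"
      obtain y where y: "y < nv a'" "x = \<alpha> y" using iso_surj[OF \<alpha>] x by blast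
      have "\<beta> (\<phi>1 x) = \<beta> (\<phi>2 x)" using fun_cong[OF e, of y] y by simp
      moreover have "\<phi>1 x \<in> {..<nv b}" "\<phi>2 x \<in> {..<nv b}"
        using p1 p2 x unfolding isos_def by auto
      ultimately show "\<phi>1 x = \<phi>2 x" using bb unfolding bij_betw_def by (meson inj_onD)
    qed
  qed
  moreover have "?F ` isos a b \<subseteq> isos a' b'"
  proof
    fix \<chi> assume "\<chi> \<in> ?F ` isos a b"
    then obtain \<phi> where p: "\<phi> \<in> isos a b" and ch: "\<chi> = ?F \<phi>" by auto
    have pi: "is_iso a b \<phi>" using p unfolding isos_def by auto
    have i: "is_iso a' b' (\<beta> \<circ> \<phi> \<circ> \<alpha>)"
      using iso_comp[OF iso_comp[OF \<alpha> pi] \<beta>] by (simp add: o_assoc)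
    have "is_iso a' b' \<chi>" unfolding ch by (rule iso_cong[OF ca' i]) simp
    moreover have "\<chi> \<in> {..<nv a'} \<rightarrow>\<^sub>E {..<nv b'}"
      unfolding ch restrict_PiE_iff
    proof
      fix x assume x: "x \<in> {..<nv a'}"
      have "\<alpha> x < nv a" using iso_range[OF \<alpha>] x by simp
      then have "\<phi> (\<alpha> x) < nv b" using p unfolding isos_def by auto
      then show "(\<beta> \<circ> \<phi> \<circ> \<alpha>) x \<in> {..<nv b'}" using iso_range[OF \<beta>] by simp
    qed
    ultimately show "\<chi> \<in> isos a' b'" unfolding isos_def by simp
  qed
  ultimately show ?thesis by (rule card_inj_on_le[OF _ _ finite_isos])
qed

lemma card_isos_eq:
  assumes ca: "closed_fobj a" and cb: "closed_fobj b"
    and \<alpha>: "is_iso a a' \<alpha>" and \<beta>: "is_iso b b' \<beta>"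
  shows "card (isos a b) = card (isos a' b')"
proof (rule antisym)
  have ca': "closed_fobj a'" using iso_closed[OF ca \<alpha>] .
  show "card (isos a b) \<le> card (isos a' b')"
    using card_isos_le[OF ca' iso_inv[OF ca \<alpha>] \<beta>] .
  show "card (isos a' b') \<le> card (isos a b)"
    using card_isos_le[OF ca \<alpha> iso_inv[OF cb \<beta>]] .
qed

lemma iso_iff_isos: "closed_fobj a \<Longrightarrow> iso a b \<longleftrightarrow> isos a b \<noteq> {}"
proof
  assume c: "closed_fobj a" and "iso a b"
  then obtain \<phi> where i: "is_iso a b \<phi>" by (auto simp: iso_def)
  have "is_iso a b (restrict \<phi> {..<nv a})" by (rule iso_cong[OF c i]) simp
  moreover have "restrict \<phi> {..<nv a} \<in> {..<nv a} \<rightarrow>\<^sub>E {..<nv b}"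
    using iso_range[OF i] by auto
  ultimately show "isos a b \<noteq> {}" unfolding isos_def by blast
next
  assume "isos a b \<noteq> {}" then show "iso a b" unfolding isos_def iso_def by blast
qed

lemma iso_sym: "closed_fobj a \<Longrightarrow> iso a b \<Longrightarrow> iso b a"
  using iso_inv unfolding iso_def by blast

lemma iso_trans: "iso a b \<Longrightarrow> iso b c \<Longrightarrow> iso a c"
  using iso_comp unfolding iso_def by blast

lemma cls_eq:
  assumes "closed_fobj a" "closed_fobj b"
  shows "iso_class a = iso_class b \<longleftrightarrow> iso a b"
proof
  assume "iso_class a = iso_class b"
  moreover have "iso b b" using iso_refl iso_def by blast
  ultimately have "b \<in> iso_class a" by (auto simp: iso_class_def)
  then show "iso a b" by (simp add: iso_class_def)
next
  assume ab: "iso a b"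
  then have ba: "iso b a" using iso_sym assms by blast
  show "iso_class a = iso_class b"
    unfolding iso_class_def using ab ba iso_trans by blast
qed

lemma rep_cls:
  assumes "closed_fobj t"
  shows "iso t (rep (iso_class t))" "closed_fobj (rep (iso_class t))"
proof -
  have "t \<in> iso_class t" using iso_refl by (auto simp: iso_class_def iso_def)
  then have "rep (iso_class t) \<in> iso_class t" unfolding rep_def by (rule someI)
  then show "iso t (rep (iso_class t))" by (simp add: iso_class_def)
  then show "closed_fobj (rep (iso_class t))" using iso_closed assms iso_def by blast
qed

lemma sigma_isos: "sigma t = card (isos t t)"
  unfolding sigma_def isos_def by simp

lemma sigma_rep:
  assumes "closed_fobj t"
  shows "sigma (rep (iso_class t)) = sigma t"
proof -
  obtain \<phi> where "is_iso t (rep (iso_class t)) \<phi>" using rep_cls[OF assms] iso_def by blast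
  then show ?thesis unfolding sigma_isos using card_isos_eq assms by metis
qed



lemma closed_add_free: "closed_fobj t \<Longrightarrow> closed_fobj (add_free t v)"
  by (simp add: closed_fobj_def add_free_def)

lemma closed_rem_free: "closed_fobj t \<Longrightarrow> closed_fobj (rem_free t v)"
  by (simp add: closed_fobj_def rem_free_def)

lemma is_iso_split: "is_iso a b \<phi> \<longleftrightarrow> bij_betw \<phi> {..<nv a} {..<nv b} \<and>
   (\<forall>v<nv a. dec b (\<phi> v) = dec a v) \<and> (\<forall>v<nv a. fr b (\<phi> v) = fr a v) \<and>
   (\<forall>v<nv a. succ b (\<phi> v) = map_option \<phi> (succ a v))"
  unfolding is_iso_def by blast

lemma key_iff:
  assumes v: "v < nv t1"
  shows "is_iso (add_free t1 v) t2 \<phi> \<longleftrightarrow> (fr t2 (\<phi> v) \<noteq> 0 \<and> is_iso t1 (rem_free t2 (\<phi> v)) \<phi>)"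
proof (cases "bij_betw \<phi> {..<nv t1} {..<nv t2}")
  case False
  then show ?thesis by (simp add: is_iso_def add_free_def rem_free_def)
next
  case True
  then have inj: "inj_on \<phi> {..<nv t1}" by (simp add: bij_betw_def)
  have eqv: "\<phi> u = \<phi> v \<longleftrightarrow> u = v" if "u < nv t1" for u
    using inj that v by (auto dest: inj_onD)
  have A: "(\<forall>u<nv t1. fr t2 (\<phi> u) = ((fr t1)(v := fr t1 v + 1)) u) \<longleftrightarrow>
        (fr t2 (\<phi> v) \<noteq> 0 \<and> (\<forall>u<nv t1. ((fr t2)(\<phi> v := fr t2 (\<phi> v) - 1)) (\<phi> u) = fr t1 u))"
  proof
    assume H: "\<forall>u<nv t1. fr t2 (\<phi> u) = ((fr t1)(v := fr t1 v + 1)) u"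
    have "fr t2 (\<phi> v) = fr t1 v + 1" using H v by simp
    moreover have "((fr t2)(\<phi> v := fr t2 (\<phi> v) - 1)) (\<phi> u) = fr t1 u" if "u < nv t1" for u
      using H that eqv[OF that] \<open>fr t2 (\<phi> v) = fr t1 v + 1\<close> by (cases "u = v") auto
    ultimately show "fr t2 (\<phi> v) \<noteq> 0 \<and> (\<forall>u<nv t1. ((fr t2)(\<phi> v := fr t2 (\<phi> v) - 1)) (\<phi> u) = fr t1 u)"
      by simp
  next
    assume H: "fr t2 (\<phi> v) \<noteq> 0 \<and> (\<forall>u<nv t1. ((fr t2)(\<phi> v := fr t2 (\<phi> v) - 1)) (\<phi> u) = fr t1 u)"
    have "fr t2 (\<phi> u) = ((fr t1)(v := fr t1 v + 1)) u" if "u < nv t1" for u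
    proof (cases "u = v")
      case True
      then show ?thesis using H v by auto
    next
      case False
      then show ?thesis using H that eqv[OF that] by auto
    qed
    then show "\<forall>u<nv t1. fr t2 (\<phi> u) = ((fr t1)(v := fr t1 v + 1)) u" by blast
  qed
  have B: "is_iso (add_free t1 v) t2 \<phi> \<longleftrightarrow> bij_betw \<phi> {..<nv t1} {..<nv t2} \<and>
   (\<forall>u<nv t1. dec t2 (\<phi> u) = dec t1 u) \<and> (\<forall>u<nv t1. fr t2 (\<phi> u) = ((fr t1)(v := fr t1 v + 1)) u) \<and>
   (\<forall>u<nv t1. succ t2 (\<phi> u) = map_option \<phi> (succ t1 u))"
    unfolding is_iso_split add_free_def fobj.sel ..
  have C: "is_iso t1 (rem_free t2 (\<phi> v)) \<phi> \<longleftrightarrow> bij_betw \<phi> {..<nv t1} {..<nv t2} \<and>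
   (\<forall>u<nv t1. dec t2 (\<phi> u) = dec t1 u) \<and> (\<forall>u<nv t1. ((fr t2)(\<phi> v := fr t2 (\<phi> v) - 1)) (\<phi> u) = fr t1 u) \<and>
   (\<forall>u<nv t1. succ t2 (\<phi> u) = map_option \<phi> (succ t1 u))"
    unfolding is_iso_split rem_free_def fobj.sel ..
  show ?thesis unfolding B C using A by blast
qed

lemma pairing_basis_right:
  "pairing f (basis t) = f (iso_class t) * of_nat (sigma (rep (iso_class t)))"
proof (cases "f (iso_class t) = 0")
  case True
  then have E: "{X. f X \<noteq> 0 \<and> basis t X \<noteq> (0::'a)} = {}" by (auto simp: basis_def)
  show ?thesis unfolding pairing_def E using True by simp
next
  case False
  then have "{X. f X \<noteq> 0 \<and> basis t X \<noteq> (0::'a)} = {iso_class t}" by (auto simp: basis_def)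
  then show ?thesis by (simp add: pairing_def basis_def)
qed

lemma pairing_basis_left:
  "pairing (basis t) g = g (iso_class t) * of_nat (sigma (rep (iso_class t)))"
proof (cases "g (iso_class t) = 0")
  case True
  then have E: "{X. basis t X \<noteq> (0::'a) \<and> g X \<noteq> 0} = {}" by (auto simp: basis_def)
  show ?thesis unfolding pairing_def E using True by simp
next
  case False
  then have "{X. basis t X \<noteq> (0::'a) \<and> g X \<noteq> 0} = {iso_class t}" by (auto simp: basis_def)
  then show ?thesis by (simp add: pairing_def basis_def)
qed

lemma sum_if_const:
  "finite A \<Longrightarrow> (\<Sum>x\<in>A. if P x then c else 0) = of_nat (card {x\<in>A. P x}) * (c::'a::semiring_1)"
  by (simp add: sum.inter_filter[symmetric])

lemma part1:
  assumes c1: "closed_fobj t1" and c2: "closed_fobj t2"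
  shows "pairing (delta t1) (basis t2) = (pairing (basis t1) (deltabar t2) :: 'k::field)"
proof -
  define n1 where "n1 = nv t1"
  define n2 where "n2 = nv t2"
  define N1 where "N1 = card {v\<in>{..<n1}. iso (add_free t1 v) t2}"
  define N2 where "N2 = card {w\<in>{..<n2}. fr t2 w \<noteq> 0 \<and> iso t1 (rem_free t2 w)}"
  define s1 where "s1 = card (isos t1 t1)"
  define s2 where "s2 = card (isos t2 t2)"
  have d1: "delta t1 (iso_class t2) = (of_nat N1 :: 'k)"
  proof -
    have "delta t1 (iso_class t2) = (\<Sum>v<n1. if iso (add_free t1 v) t2 then 1 else (0::'k))"
      unfolding delta_def basis_def n1_def
    proof (rule sum.cong[OF refl])
      fix v
      have "iso_class t2 = iso_class (add_free t1 v) \<longleftrightarrow> iso (add_free t1 v) t2"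
        using cls_eq[OF closed_add_free[OF c1] c2, of v] by auto
      then show "(if iso_class t2 = iso_class (add_free t1 v) then 1 else 0) =
          (if iso (add_free t1 v) t2 then 1 else (0::'k))" by simp
    qed
    also have "\<dots> = of_nat N1" unfolding N1_def by (simp add: sum_if_const)
    finally show ?thesis .
  qed
  have d2: "deltabar t2 (iso_class t1) = (of_nat N2 :: 'k)"
  proof -
    have "deltabar t2 (iso_class t1) = (\<Sum>w<n2. if fr t2 w \<noteq> 0 \<and> iso t1 (rem_free t2 w) then 1 else (0::'k))"
      unfolding deltabar_def basis_def n2_def
    proof (rule sum.cong[OF refl])
      fix w
      have "iso_class t1 = iso_class (rem_free t2 w) \<longleftrightarrow> iso t1 (rem_free t2 w)"
        using cls_eq[OF c1 closed_rem_free[OF c2], of w] by auto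
      then show "(if fr t2 w = 0 then 0 else if iso_class t1 = iso_class (rem_free t2 w) then 1 else 0) =
          (if fr t2 w \<noteq> 0 \<and> iso t1 (rem_free t2 w) then 1 else (0::'k))" by simp
    qed
    also have "\<dots> = of_nat N2" unfolding N2_def by (simp add: sum_if_const)
    finally show ?thesis .
  qed
  define P1 where "P1 = (SIGMA v:{..<n1}. isos (add_free t1 v) t2)"
  define W where "W = {w\<in>{..<n2}. fr t2 w \<noteq> 0}"
  define P2 where "P2 = (SIGMA w:W. isos t1 (rem_free t2 w))"
  have cP1: "card P1 = N1 * s2"
  proof -
    have "card P1 = (\<Sum>v<n1. card (isos (add_free t1 v) t2))"
      unfolding P1_def by (rule card_SigmaI) (auto simp: finite_isos)
    also have "\<dots> = (\<Sum>v<n1. if iso (add_free t1 v) t2 then s2 else 0)"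
    proof (rule sum.cong[OF refl])
      fix v
      show "card (isos (add_free t1 v) t2) = (if iso (add_free t1 v) t2 then s2 else 0)"
      proof (cases "iso (add_free t1 v) t2")
        case True
        then obtain \<psi> where \<psi>: "is_iso (add_free t1 v) t2 \<psi>" by (auto simp: iso_def)
        show ?thesis using True card_isos_eq[OF closed_add_free[OF c1] c2 \<psi> iso_refl]
          unfolding s2_def by simp
      next
        case False
        then show ?thesis using iso_iff_isos[OF closed_add_free[OF c1]] by simp
      qed
    qed
    also have "\<dots> = N1 * s2" unfolding N1_def by (simp add: sum_if_const)
    finally show ?thesis .
  qed
  have cP2: "card P2 = N2 * s1"
  proof -
    have "card P2 = (\<Sum>w\<in>W. card (isos t1 (rem_free t2 w)))"
      unfolding P2_def by (rule card_SigmaI) (auto simp: finite_isos W_def)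
    also have "\<dots> = (\<Sum>w\<in>W. if iso t1 (rem_free t2 w) then s1 else 0)"
    proof (rule sum.cong[OF refl])
      fix w
      show "card (isos t1 (rem_free t2 w)) = (if iso t1 (rem_free t2 w) then s1 else 0)"
      proof (cases "iso t1 (rem_free t2 w)")
        case True
        then obtain \<psi> where \<psi>: "is_iso t1 (rem_free t2 w) \<psi>" by (auto simp: iso_def)
        show ?thesis using True card_isos_eq[OF c1 closed_rem_free[OF c2] iso_refl iso_inv[OF c1 \<psi>]]
          unfolding s1_def by simp
      next
        case False
        then show ?thesis using iso_iff_isos[OF c1] by simp
      qed
    qed
    also have "\<dots> = N2 * s1" unfolding N2_def W_def
      by (simp add: sum_if_const conj_assoc)
    finally show ?thesis .
  qed
  have "card P1 = card P2"
  proof (rule card_bij_eq[where f = "\<lambda>(v, \<phi>). (\<phi> v, \<phi>)" and g = "\<lambda>(w, \<phi>). (inv_into {..<n1} \<phi> w, \<phi>)"])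
    show "inj_on (\<lambda>(v, \<phi>). (\<phi> v, \<phi>)) P1"
    proof (rule inj_onI)
      fix x y assume x: "x \<in> P1" and y: "y \<in> P1" and e0: "(\<lambda>(v, \<phi>). (\<phi> v, \<phi>)) x = (\<lambda>(v, \<phi>). (\<phi> v, \<phi>)) y"
      obtain v \<phi> where xv: "x = (v, \<phi>)" by (cases x)
      obtain v' \<phi>' where yv: "y = (v', \<phi>')" by (cases y)
      have pp: "\<phi>' = \<phi>" and e: "\<phi> v = \<phi> v'" using e0 by (auto simp: xv yv)
      have a: "(v, \<phi>) \<in> P1" "(v', \<phi>) \<in> P1" using x y xv yv pp by auto
      have "bij_betw \<phi> {..<n1} {..<n2}" using a(1) unfolding P1_def isos_def is_iso_def n1_def n2_def
        by (simp add: add_free_def)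
      then have "v = v'" using a e unfolding P1_def by (auto simp: bij_betw_def dest: inj_onD)
      then show "x = y" using xv yv pp by simp
    qed
    show "(\<lambda>(v, \<phi>). (\<phi> v, \<phi>)) ` P1 \<subseteq> P2"
    proof
      fix z assume "z \<in> (\<lambda>(v, \<phi>). (\<phi> v, \<phi>)) ` P1"
      then obtain v \<phi> where a: "(v, \<phi>) \<in> P1" and zz: "z = (\<phi> v, \<phi>)" by auto
      then have v: "v < nv t1" and i: "is_iso (add_free t1 v) t2 \<phi>"
        and pe: "\<phi> \<in> {..<nv t1} \<rightarrow>\<^sub>E {..<nv t2}"
        unfolding P1_def isos_def n1_def by (auto simp: add_free_def)
      have "\<phi> v < nv t2" using pe v by auto
      then show "z \<in> P2" unfolding zz using key_iff[OF v] i pe unfolding P2_def W_def isos_def n2_def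
        by (auto simp: rem_free_def)
    qed
    show "inj_on (\<lambda>(w, \<phi>). (inv_into {..<n1} \<phi> w, \<phi>)) P2"
    proof (rule inj_onI)
      fix x y assume x: "x \<in> P2" and y: "y \<in> P2" and e0: "(\<lambda>(w, \<phi>). (inv_into {..<n1} \<phi> w, \<phi>)) x = (\<lambda>(w, \<phi>). (inv_into {..<n1} \<phi> w, \<phi>)) y"
      obtain w \<phi> where xv: "x = (w, \<phi>)" by (cases x)
      obtain w' \<phi>' where yv: "y = (w', \<phi>')" by (cases y)
      have pp: "\<phi>' = \<phi>" and e: "inv_into {..<n1} \<phi> w = inv_into {..<n1} \<phi> w'" using e0 by (auto simp: xv yv)
      have a: "(w, \<phi>) \<in> P2" "(w', \<phi>) \<in> P2" using x y xv yv pp by auto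
      have "bij_betw \<phi> {..<n1} {..<n2}" using a(1) unfolding P2_def isos_def is_iso_def n1_def n2_def
        by (simp add: rem_free_def)
      then have "\<phi> ` {..<n1} = {..<n2}" by (simp add: bij_betw_def)
      moreover have "w \<in> {..<n2}" "w' \<in> {..<n2}" using a unfolding P2_def W_def by auto
      ultimately have "w = w'" using e inv_into_injective by metis
      then show "x = y" using xv yv pp by simp
    qed
    show "(\<lambda>(w, \<phi>). (inv_into {..<n1} \<phi> w, \<phi>)) ` P2 \<subseteq> P1"
    proof
      fix z assume "z \<in> (\<lambda>(w, \<phi>). (inv_into {..<n1} \<phi> w, \<phi>)) ` P2"
      then obtain w \<phi> where a: "(w, \<phi>) \<in> P2" and zz: "z = (inv_into {..<n1} \<phi> w, \<phi>)" by auto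
      then have w: "w < n2" and i: "is_iso t1 (rem_free t2 w) \<phi>" and f: "fr t2 w \<noteq> 0"
        and pe: "\<phi> \<in> {..<nv t1} \<rightarrow>\<^sub>E {..<nv t2}"
        unfolding P2_def W_def isos_def by (auto simp: rem_free_def)
      have "bij_betw \<phi> {..<n1} {..<n2}" using i unfolding is_iso_def n1_def n2_def
        by (simp add: rem_free_def)
      then have im: "\<phi> ` {..<n1} = {..<n2}" by (simp add: bij_betw_def)
      define v where "v = inv_into {..<n1} \<phi> w"
      have v: "v < nv t1" unfolding v_def n1_def[symmetric] using w im
        by (metis inv_into_into lessThan_iff)
      have pv: "\<phi> v = w" unfolding v_def using w im by (simp add: f_inv_into_f)
      have "is_iso (add_free t1 v) t2 \<phi>" using key_iff[OF v] i f pv by simp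
      then have "(v, \<phi>) \<in> P1" using v pe
        unfolding P1_def isos_def n1_def by (simp add: add_free_def)
      then show "z \<in> P1" unfolding zz v_def .
    qed
    show "finite P1" unfolding P1_def by (auto simp: finite_isos)
    show "finite P2" unfolding P2_def W_def by (auto simp: finite_isos)
  qed
  then have nat_eq: "N1 * s2 = N2 * s1" using cP1 cP2 by simp
  have "pairing (delta t1) (basis t2) = (of_nat N1 * of_nat s2 :: 'k)"
    using sigma_rep[OF c2] by (simp add: pairing_basis_right d1 s2_def sigma_isos[symmetric])
  also have "\<dots> = of_nat N2 * of_nat s1" using nat_eq by (metis of_nat_mult)
  also have "\<dots> = pairing (basis t1) (deltabar t2)"
    using sigma_rep[OF c1] by (simp add: pairing_basis_left d2 s1_def sigma_isos[symmetric])
  finally show ?thesis .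
qed




lemma fert_iso:
  assumes c: "closed_fobj a" and i: "is_iso a b \<phi>" and v: "v < nv a"
  shows "fertility b (\<phi> v) = fertility a v"
proof -
  have inj: "inj_on \<phi> {..<nv a}" using i by (simp add: is_iso_def bij_betw_def)
  have "{u. u < nv b \<and> succ b u = Some (\<phi> v)} = \<phi> ` {u. u < nv a \<and> succ a u = Some v}"
  proof
    show "\<phi> ` {u. u < nv a \<and> succ a u = Some v} \<subseteq> {u. u < nv b \<and> succ b u = Some (\<phi> v)}"
    proof
      fix x assume "x \<in> \<phi> ` {u. u < nv a \<and> succ a u = Some v}"
      then obtain u where u: "u < nv a" "succ a u = Some v" "x = \<phi> u" by auto
      have "succ b (\<phi> u) = map_option \<phi> (succ a u)" using i u unfolding is_iso_def by auto
      then show "x \<in> {u. u < nv b \<and> succ b u = Some (\<phi> v)}" using u iso_range[OF i] by simp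
    qed
    show "{u. u < nv b \<and> succ b u = Some (\<phi> v)} \<subseteq> \<phi> ` {u. u < nv a \<and> succ a u = Some v}"
    proof
      fix x assume "x \<in> {u. u < nv b \<and> succ b u = Some (\<phi> v)}"
      then have x: "x < nv b" "succ b x = Some (\<phi> v)" by auto
      obtain u where u: "u < nv a" "x = \<phi> u" using iso_surj[OF i x(1)] by blast
      have "succ b (\<phi> u) = map_option \<phi> (succ a u)" using i u unfolding is_iso_def by auto
      then obtain w where w: "succ a u = Some w" and pw: "\<phi> w = \<phi> v" using x u by (cases "succ a u") auto
      have "w < nv a" using c u w unfolding closed_fobj_def by blast
      then have "w = v" using pw inj v by (auto dest: inj_onD)
      then show "x \<in> \<phi> ` {u. u < nv a \<and> succ a u = Some v}" using u w by auto
    qed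
  qed
  moreover have "inj_on \<phi> {u. u < nv a \<and> succ a u = Some v}"
    using inj by (rule inj_on_subset) auto
  ultimately show ?thesis unfolding fertility_def by (simp add: card_image)
qed

lemma Phi_iso:
  assumes c: "closed_fobj a" and i: "is_iso a b \<phi>"
  shows "Phi b = Phi a"
proof -
  have bj: "bij_betw \<phi> {..<nv a} {..<nv b}" using i by (simp add: is_iso_def)
  then have "mset_set {..<nv b} = image_mset \<phi> (mset_set {..<nv a})"
    by (simp add: bij_betw_def image_mset_mset_set)
  then have "Phi b = image_mset ((\<lambda>v. (dec b v, int (fertility b v) + int (fr b v) - 1)) \<circ> \<phi>) (mset_set {..<nv a})"
    unfolding Phi_def by (simp add: image_mset.compositionality)
  also have "\<dots> = Phi a" unfolding Phi_def
  proof (rule image_mset_cong)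
    fix v assume "v \<in># mset_set {..<nv a}"
    then have v: "v < nv a" by simp
    show "((\<lambda>v. (dec b v, int (fertility b v) + int (fr b v) - 1)) \<circ> \<phi>) v =
        (dec a v, int (fertility a v) + int (fr a v) - 1)"
      using i v fert_iso[OF c i v] unfolding is_iso_def by simp
  qed
  finally show ?thesis .
qed

lemma image_mset_upd:
  assumes "finite A" "v \<in> A"
  shows "image_mset (g(v := b)) (mset_set A) = image_mset g (mset_set A) - {#g v#} + {#b#}"
proof -
  have "mset_set A = add_mset v (mset_set (A - {v}))" using assms by (simp add: mset_set.remove)
  moreover have "image_mset (g(v := b)) (mset_set (A - {v})) = image_mset g (mset_set (A - {v}))"
    by (rule image_mset_cong) (simp add: assms)
  ultimately show ?thesis by simp
qed

definition yv :: "'c fobj \<Rightarrow> nat \<Rightarrow> 'c \<times> int" where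
  "yv t v = (dec t v, int (fertility t v) + int (fr t v) - 1)"

lemma Phi_add_free:
  assumes v: "v < nv t"
  shows "Phi (add_free t v) = Phi t - {#yv t v#} + {#(fst (yv t v), snd (yv t v) + 1)#}"
proof -
  have fe: "fertility (add_free t v) = fertility t"
    by (simp add: fertility_def add_free_def fun_eq_iff)
  have "Phi (add_free t v) = image_mset ((yv t)(v := (fst (yv t v), snd (yv t v) + 1))) (mset_set {..<nv t})"
  proof -
    have nn: "nv (add_free t v) = nv t" by (simp add: add_free_def)
    show ?thesis unfolding Phi_def fe nn
      by (rule image_mset_cong) (auto simp: add_free_def yv_def)
  qed
  also have "\<dots> = Phi t - {#yv t v#} + {#(fst (yv t v), snd (yv t v) + 1)#}"
    using v by (simp add: image_mset_upd Phi_def yv_def[abs_def])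
  finally show ?thesis .
qed

lemma PhiL_delta:
  assumes c: "closed_fobj t"
  shows "PhiL (delta t :: 'c fobj set \<Rightarrow> 'k::field) m = (\<Sum>v<nv t. mono (Phi (add_free t v)) m)"
proof -
  define S where "S = (\<lambda>v. iso_class (add_free t v)) ` {..<nv t}"
  define g where "g = (\<lambda>X. mono (Phi (rep X)) m :: 'k)"
  have fin: "finite S" unfolding S_def by simp
  have sub: "{X. (delta t X :: 'k) \<noteq> 0} \<subseteq> S"
  proof
    fix X assume "X \<in> {X. (delta t X :: 'k) \<noteq> 0}"
    then have "(\<Sum>v<nv t. basis (add_free t v) X :: 'k) \<noteq> 0" by (simp add: delta_def)
    then obtain v where "v < nv t" "(basis (add_free t v) X :: 'k) \<noteq> 0"
      by (meson lessThan_iff sum.neutral)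
    then show "X \<in> S" unfolding S_def basis_def by (auto split: if_splits)
  qed
  have "PhiL (delta t :: 'c fobj set \<Rightarrow> 'k) m = (\<Sum>X\<in>S. delta t X * g X)"
    unfolding PhiL_def g_def
    by (rule sum.mono_neutral_left[OF fin sub]) auto
  also have "\<dots> = (\<Sum>X\<in>S. \<Sum>v<nv t. basis (add_free t v) X * g X)"
    by (simp add: delta_def sum_distrib_right)
  also have "\<dots> = (\<Sum>v<nv t. \<Sum>X\<in>S. basis (add_free t v) X * g X)"
    by (rule sum.swap)
  also have "\<dots> = (\<Sum>v<nv t. g (iso_class (add_free t v)))"
  proof (rule sum.cong[OF refl])
    fix v assume "v \<in> {..<nv t}"
    then have "iso_class (add_free t v) \<in> S" unfolding S_def by auto
    moreover have "(\<Sum>X\<in>S. basis (add_free t v) X * g X) = (\<Sum>X\<in>S. if X = iso_class (add_free t v) then g X else 0)"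
      by (rule sum.cong) (simp_all add: basis_def)
    ultimately show "(\<Sum>X\<in>S. basis (add_free t v) X * g X) = g (iso_class (add_free t v))"
      using fin by (simp add: sum.delta)
  qed
  also have "\<dots> = (\<Sum>v<nv t. mono (Phi (add_free t v)) m)"
  proof (rule sum.cong[OF refl])
    fix v
    have ca: "closed_fobj (add_free t v)" using c by (rule closed_add_free)
    obtain \<phi> where "is_iso (add_free t v) (rep (iso_class (add_free t v))) \<phi>"
      using rep_cls(1)[OF ca] iso_def by blast
    then show "g (iso_class (add_free t v)) = mono (Phi (add_free t v)) m"
      unfolding g_def using Phi_iso[OF ca] by simp
  qed
  finally show ?thesis .
qed

lemma part2:
  assumes c: "closed_fobj t"
  shows "PhiL (delta t :: 'c fobj set \<Rightarrow> 'k::field) = Dpoly (mono (Phi t))"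
proof
  fix m'
  define M where "M = Phi t"
  define h where "h = (\<lambda>y. mono (M - {#y#} + {#(fst y, snd y + 1)#}) m' :: 'k)"
  have dp: "Dpoly (mono M) m' = Dmon M m'"
  proof -
    have "{m. (mono M m :: 'k) \<noteq> 0} = {M}" by (auto simp: mono_def)
    then show ?thesis unfolding Dpoly_def by (simp add: mono_def)
  qed
  have MM: "M = image_mset (yv t) (mset_set {..<nv t})" unfolding M_def Phi_def yv_def[abs_def] ..
  have setM: "set_mset M = yv t ` {..<nv t}" unfolding MM by simp
  have cnt: "count M y = card {v \<in> {..<nv t}. yv t v = y}" for y
  proof -
    have "count M y = (\<Sum>x | x \<in># mset_set {..<nv t} \<and> y = yv t x. count (mset_set {..<nv t}) x)"
      unfolding MM by (rule count_image_mset')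
    also have "\<dots> = (\<Sum>x \<in> {v \<in> {..<nv t}. yv t v = y}. 1)"
      by (rule sum.cong) auto
    finally show ?thesis by simp
  qed
  have "PhiL (delta t :: 'c fobj set \<Rightarrow> 'k) m' = (\<Sum>v<nv t. h (yv t v))"
    unfolding PhiL_delta[OF c] h_def M_def by (simp add: Phi_add_free)
  also have "\<dots> = (\<Sum>y\<in>yv t ` {..<nv t}. \<Sum>v\<in>{v \<in> {..<nv t}. yv t v = y}. h (yv t v))"
    by (rule sum.image_gen) simp
  also have "\<dots> = (\<Sum>y\<in>set_mset M. of_nat (count M y) * h y)"
    unfolding setM cnt by (rule sum.cong[OF refl]) simp
  also have "\<dots> = Dpoly (mono M) m'"
    unfolding dp Dmon_def h_def ..
  finally show "PhiL (delta t :: 'c fobj set \<Rightarrow> 'k) m' = Dpoly (mono (Phi t)) m'" unfolding M_def .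
qed



lemma closed_of:
  "is_aroma t \<or> is_tree t \<Longrightarrow> closed_fobj t"
proof -
  assume h: "is_aroma t \<or> is_tree t"
  show "closed_fobj t" unfolding closed_fobj_def
  proof (intro allI impI)
    fix v w assume v: "v < nv t" and s: "succ t v = Some w"
    show "w < nv t"
    proof (cases "is_aroma t")
      case True
      then obtain w' where "w' < nv t" "succ t v = Some w'" using v unfolding is_aroma_def by blast
      then show ?thesis using s by simp
    next
      case False
      then have "is_tree t" using h by blast
      then show ?thesis using v s unfolding is_tree_def by blast
    qed
  qed
qed

theorem proposition4p8:
  fixes t1 t2 t :: "'c::finite fobj"
  assumes "(is_aroma t1 \<and> is_aroma t2) \<or> (is_tree t1 \<and> is_tree t2)"
    and "is_aroma t \<or> is_tree t"
  shows "pairing (delta t1) (basis t2) = (pairing (basis t1) (deltabar t2) :: 'k::field_char_0)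
    \<and> PhiL (delta t :: 'c fobj set \<Rightarrow> 'k) = Dpoly (mono (Phi t))"
proof
  have "closed_fobj t1" "closed_fobj t2" using assms(1) closed_of by blast+
  then show "pairing (delta t1) (basis t2) = (pairing (basis t1) (deltabar t2) :: 'k::field_char_0)"
    by (rule part1)
  show "PhiL (delta t :: 'c fobj set \<Rightarrow> 'k) = Dpoly (mono (Phi t))"
    using closed_of[OF assms(2)] by (rule part2)
qed

end
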